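(* Let $E$ be a finite set and $\omega:2^E\to[0,\infty)$ not identically zero. Let $r$ and $s$ be the maximum and minimum cardinality of sets $S$ with $\omega(S)>0$, $\ell=r-s$, and let $y_1,\dots,y_\ell$ be indeterminates indexed by $\ell$ new elements $1,\dots,\ell$. Define $f_k(\omega)=\sum_{S\subseteq E,|S|=k}\omega(S)$ and $Z(\omega^\flat;\mathbf{y})=\sum_{S\subseteq E}\omega(S)\prod_{e\in S}y_e\; e_{r-|S|}(y_1,\dots,y_\ell)$, where $e_j$ is the $j$-th elementary symmetric function (and $e_j=0$ for $j<0$ or $j>\ell$). Then the sequence $(f_k(\omega): s\le k\le r)$ is logarithmically concave with no internal zeros if and only if the polynomial in $y_1,\dots,y_\ell$ obtained from $Z(\omega^\flat;\mathbf{y})$ by setting $y_e=1$ for all $e\in E$ is Rayleigh.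
   Context: A multiaffine polynomial $Z$ in indeterminates $\{y_c\}$ with nonnegative coefficients is Rayleigh if $\Delta Z\{i,j\}=Z_iZ_j-Z_{ij}Z\ge0$ (subscripts = partial derivatives) for all distinct indices $i,j$ and all positive values of the indeterminates. A nonnegative sequence $(a_k)$ is logarithmically concave if $a_k^2\ge a_{k-1}a_{k+1}$ for all interior $k$, and has no internal zeros if $i<j<k$ and $a_ia_k\ne0$ imply $a_j\ne0$. *)

theory Defs
  imports "HOL-Analysis.Analysis"
begin

definition esym :: "nat \<Rightarrow> int \<Rightarrow> (nat \<Rightarrow> real) \<Rightarrow> real" where
  "esym l j z = (if j < 0 then 0 else
     (\<Sum>A\<in>{A. A \<subseteq> {1..l} \<and> int (card A) = j}. \<Prod>i\<in>A. z i))"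

definition fk :: "'a set \<Rightarrow> ('a set \<Rightarrow> real) \<Rightarrow> nat \<Rightarrow> real" where
  "fk E \<omega> k = (\<Sum>S\<in>{S. S \<subseteq> E \<and> card S = k}. \<omega> S)"

definition rmax :: "'a set \<Rightarrow> ('a set \<Rightarrow> real) \<Rightarrow> nat" where
  "rmax E \<omega> = Max {card S | S. S \<subseteq> E \<and> \<omega> S > 0}"

definition smin :: "'a set \<Rightarrow> ('a set \<Rightarrow> real) \<Rightarrow> nat" where
  "smin E \<omega> = Min {card S | S. S \<subseteq> E \<and> \<omega> S > 0}"

text \<open>Z(omega-flat; y): indeterminates y_e (e in E) given by y, and the new
  indeterminates y_1..y_l given by z, where l = r - s.\<close>
definition Zflat :: "'a set \<Rightarrow> ('a set \<Rightarrow> real) \<Rightarrow> ('a \<Rightarrow> real) \<Rightarrow> (nat \<Rightarrow> real) \<Rightarrow> real" where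
  "Zflat E \<omega> y z =
     (\<Sum>S\<in>{S. S \<subseteq> E}. \<omega> S * (\<Prod>e\<in>S. y e) *
        esym (rmax E \<omega> - smin E \<omega>) (int (rmax E \<omega>) - int (card S)) z)"

definition pd :: "nat \<Rightarrow> ((nat \<Rightarrow> real) \<Rightarrow> real) \<Rightarrow> (nat \<Rightarrow> real) \<Rightarrow> real" where
  "pd i Z z = deriv (\<lambda>t. Z (z(i := t))) (z i)"

definition multiaffine_nonneg :: "nat \<Rightarrow> ((nat \<Rightarrow> real) \<Rightarrow> real) \<Rightarrow> bool" where
  "multiaffine_nonneg l Z \<longleftrightarrow> (\<exists>c :: nat set \<Rightarrow> real. (\<forall>A. c A \<ge> 0) \<and>
     (\<forall>z. Z z = (\<Sum>A\<in>Pow {1..l}. c A * (\<Prod>i\<in>A. z i))))"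

definition rayleigh :: "nat \<Rightarrow> ((nat \<Rightarrow> real) \<Rightarrow> real) \<Rightarrow> bool" where
  "rayleigh l Z \<longleftrightarrow> multiaffine_nonneg l Z \<and>
     (\<forall>i\<in>{1..l}. \<forall>j\<in>{1..l}. i \<noteq> j \<longrightarrow> (\<forall>z. (\<forall>k\<in>{1..l}. z k > 0) \<longrightarrow>
        pd i Z z * pd j Z z - pd j (pd i Z) z * Z z \<ge> 0))"

definition log_concave_on :: "(nat \<Rightarrow> real) \<Rightarrow> nat \<Rightarrow> nat \<Rightarrow> bool" where
  "log_concave_on a s r \<longleftrightarrow> (\<forall>k. s < k \<and> k < r \<longrightarrow> (a k)^2 \<ge> a (k - 1) * a (k + 1))"

definition no_internal_zeros_on :: "(nat \<Rightarrow> real) \<Rightarrow> nat \<Rightarrow> nat \<Rightarrow> bool" where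
  "no_internal_zeros_on a s r \<longleftrightarrow> (\<forall>i j k. s \<le> i \<and> i < j \<and> j < k \<and> k \<le> r \<and>
      a i * a k \<noteq> 0 \<longrightarrow> a j \<noteq> 0)"

end

theory Submission
  imports Defs
begin


definition Gs :: "(nat \<Rightarrow> real) \<Rightarrow> nat \<Rightarrow> nat set \<Rightarrow> (nat \<Rightarrow> real) \<Rightarrow> real" where
 "Gs a p W z = (\<Sum>A\<in>Pow W. a (card A + p) * (\<Prod>i\<in>A. z i))"

lemma Gs_empty[simp]: "Gs a p {} z = a p" by (simp add: Gs_def)

lemma Gs_insert:
  assumes "finite W" "k \<notin> W"
  shows "Gs a p (insert k W) z = Gs a p W z + z k * Gs a (Suc p) W z"
proof -
  have disj: "Pow W \<inter> insert k ` Pow W = {}" using assms(2) by auto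
  have inj: "inj_on (insert k) (Pow W)" using assms(2) unfolding inj_on_def
    by (metis PowD insert_ident subsetD)
  have "Gs a p (insert k W) z = (\<Sum>A\<in>Pow W. a (card A + p) * (\<Prod>i\<in>A. z i))
      + (\<Sum>A\<in>insert k ` Pow W. a (card A + p) * (\<Prod>i\<in>A. z i))"
    unfolding Gs_def Pow_insert by (rule sum.union_disjoint) (use assms disj in auto)
  also have "(\<Sum>A\<in>insert k ` Pow W. a (card A + p) * (\<Prod>i\<in>A. z i))
      = (\<Sum>A\<in>Pow W. a (card (insert k A) + p) * (\<Prod>i\<in>insert k A. z i))"
    by (subst sum.reindex[OF inj]) simp
  also have "\<dots> = (\<Sum>A\<in>Pow W. z k * (a (card A + Suc p) * (\<Prod>i\<in>A. z i)))"
  proof (rule sum.cong)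
    fix A assume "A \<in> Pow W"
    then have "finite A" "k \<notin> A" using assms finite_subset by auto
    then show "a (card (insert k A) + p) * (\<Prod>i\<in>insert k A. z i) = z k * (a (card A + Suc p) * (\<Prod>i\<in>A. z i))"
      by simp
  qed simp
  finally show ?thesis by (simp add: Gs_def sum_distrib_left)
qed

lemma Gs_cong:
  assumes "\<And>i. i \<in> W \<Longrightarrow> z i = w i"
  shows "Gs a p W z = Gs a p W w"
  unfolding Gs_def
  by (rule sum.cong[OF refl], rule arg_cong[where f="\<lambda>x. _ * x"], rule prod.cong) (use assms in auto)


definition lcs :: "(nat \<Rightarrow> real) \<Rightarrow> bool" where
  "lcs c \<longleftrightarrow> (\<forall>n. c n * c (n + 2) \<le> (c (n+1))^2)"

definition nizs :: "(nat \<Rightarrow> real) \<Rightarrow> bool" where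
  "nizs c \<longleftrightarrow> (\<forall>i j k. i < j \<and> j < k \<and> c i \<noteq> 0 \<and> c k \<noteq> 0 \<longrightarrow> c j \<noteq> 0)"

lemma lc_mid:
  assumes nn: "\<And>n. c n \<ge> 0" and lc: "lcs c" and nz: "nizs c"
  shows "c n * c (n+3) \<le> c (n+1) * c (n+2)"
proof (cases "c (n+1) = 0 \<or> c (n+2) = 0")
  case True
  have a: "c n \<noteq> 0 \<and> c (n+3) \<noteq> 0 \<longrightarrow> c (n+1) \<noteq> 0"
    using nz unfolding nizs_def by (meson add_less_cancel_left one_less_numeral_iff semiring_norm(77) less_add_same_cancel1 zero_less_one) 
  have b: "c n \<noteq> 0 \<and> c (n+3) \<noteq> 0 \<longrightarrow> c (n+2) \<noteq> 0"
  proof -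
    have "n < n+2" "n+2 < n+3" by simp_all
    then show ?thesis using nz unfolding nizs_def by blast
  qed
  from True a b have "c n = 0 \<or> c (n+3) = 0" by blast
  then show ?thesis using nn by (metis mult_nonneg_nonneg mult_zero_left mult_zero_right)
next
  case False
  then have p1: "c (n+1) > 0" and p2: "c (n+2) > 0" using nn by (simp_all add: less_le)
  have h1: "c n * c (n+2) \<le> c (n+1)^2" using lc unfolding lcs_def by blast
  have h2: "c (n+1) * c (n+1+2) \<le> c (n+1+1)^2" using lc unfolding lcs_def by blast
  then have h2: "c (n+1) * c (n+3) \<le> c (n+2)^2" by (simp add: eval_nat_numeral)
  have A: "(c n * c (n+2)) * (c (n+1) * c (n+3)) \<le> c (n+1)^2 * c (n+2)^2"
    by (rule mult_mono[OF h1 h2]) (simp_all add: nn mult_nonneg_nonneg)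
  have eqL: "(c n * c (n+2)) * (c (n+1) * c (n+3)) = (c n * c (n+3)) * (c (n+1) * c (n+2))"
    by (simp add: ac_simps)
  have eqR: "c (n+1)^2 * c (n+2)^2 = (c (n+1) * c (n+2)) * (c (n+1) * c (n+2))"
    by (simp add: power2_eq_square ac_simps)
  have "(c n * c (n+3)) * (c (n+1) * c (n+2)) \<le> (c (n+1) * c (n+2)) * (c (n+1) * c (n+2))"
    using A eqL eqR by metis
  then show ?thesis by (rule mult_right_le_imp_le) (use p1 p2 in auto)
qed

lemma lc_step:
  assumes nn: "\<And>n. c n \<ge> 0" and lc: "lcs c" and nz: "nizs c" and x: "x \<ge> 0"
  defines "d \<equiv> (\<lambda>n. c n + x * c (Suc n))"
  shows "(\<forall>n. d n \<ge> 0) \<and> lcs d \<and> nizs d"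
proof (intro conjI allI)
  fix n show "d n \<ge> 0" unfolding d_def using nn x by simp
next
  show "lcs d" unfolding lcs_def
  proof
    fix n
    have e: "(d (n+1))^2 - d n * d (n+2) = (c (n+1)^2 - c n * c (n+2))
       + x * (c (n+1) * c (n+2) - c n * c (n+3)) + x^2 * (c (n+2)^2 - c (n+1) * c (n+3))"
      unfolding d_def by (simp add: power2_eq_square algebra_simps numeral_3_eq_3 numeral_2_eq_2)
    have t1: "c (n+1)^2 - c n * c (n+2) \<ge> 0" using lc unfolding lcs_def by (simp)
    have t2: "c (n+1) * c (n+2) - c n * c (n+3) \<ge> 0" using lc_mid[OF nn lc nz, of n] by simp
    have "c (n+1) * c (n+1+2) \<le> c (n+1+1)^2" using lc unfolding lcs_def by blast
    then have t3: "c (n+2)^2 - c (n+1) * c (n+3) \<ge> 0" by (simp add: eval_nat_numeral)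
    have "0 \<le> (c (n+1)^2 - c n * c (n+2))
       + x * (c (n+1) * c (n+2) - c n * c (n+3)) + x^2 * (c (n+2)^2 - c (n+1) * c (n+3))"
      using t1 t2 t3 x by simp
    then show "d n * d (n+2) \<le> (d (n+1))^2" using e by linarith
  qed
next
  show "nizs d" unfolding nizs_def
  proof (intro allI impI)
    fix i j k assume h: "i < j \<and> j < k \<and> d i \<noteq> 0 \<and> d k \<noteq> 0"
    then obtain i' where i': "i' \<le> j" "c i' \<noteq> 0"
      unfolding d_def by (metis Suc_leI le_eq_less_or_eq mult_zero_right add.right_neutral)
    from h obtain k' where k': "j < k'" "c k' \<noteq> 0"
      unfolding d_def by (metis less_SucI mult_zero_right add.right_neutral)
    show "d j \<noteq> 0"
    proof (cases "i' = j")
      case True then show ?thesis using i' nn x unfolding d_def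
        by (metis add_nonneg_nonneg antisym_conv1 mult_nonneg_nonneg not_le add_pos_nonneg)
    next
      case False
      then have "c j \<noteq> 0" using i' k' nz unfolding nizs_def by (meson le_neq_implies_less)
      then show ?thesis using nn x unfolding d_def
        by (metis add_nonneg_nonneg antisym_conv1 mult_nonneg_nonneg not_le add_pos_nonneg)
    qed
  qed
qed

lemma Gs_seq:
  assumes "finite W" and w: "\<forall>k\<in>W. w k \<ge> 0"
    and nn: "\<And>n. a n \<ge> 0" and lc: "lcs a" and nz: "nizs a"
  shows "(\<forall>n. Gs a n W w \<ge> 0) \<and> lcs (\<lambda>n. Gs a n W w) \<and> nizs (\<lambda>n. Gs a n W w)"
  using assms(1) w
proof (induction W rule: finite_induct)
  case empty
  then show ?case using nn lc nz by simp
next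
  case (insert k F)
  let ?c = "\<lambda>n. Gs a n F w"
  have IH: "(\<forall>n. ?c n \<ge> 0) \<and> lcs ?c \<and> nizs ?c" using insert by simp
  have eq: "(\<lambda>n. Gs a n (insert k F) w) = (\<lambda>n. ?c n + w k * ?c (Suc n))"
    using insert by (simp add: Gs_insert)
  have "w k \<ge> 0" using insert by simp
  then have X: "(\<forall>n. 0 \<le> ?c n + w k * ?c (Suc n)) \<and> lcs (\<lambda>n. ?c n + w k * ?c (Suc n))
      \<and> nizs (\<lambda>n. ?c n + w k * ?c (Suc n))"
    using lc_step[of ?c "w k"] IH by blast
  have "\<forall>n. Gs a n (insert k F) w = ?c n + w k * ?c (Suc n)"
    using insert by (simp add: Gs_insert)
  then show ?case using X by simp
qed

lemma Gs_upd:
  assumes "finite V" "i \<in> V"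
  shows "Gs a p V (z(i := t)) = Gs a p (V - {i}) z + t * Gs a (Suc p) (V - {i}) z"
proof -
  have V: "V = insert i (V - {i})" using assms by auto
  have "Gs a p V (z(i := t)) = Gs a p (V - {i}) (z(i := t)) + t * Gs a (Suc p) (V - {i}) (z(i := t))"
    by (subst V, subst Gs_insert) (use assms in auto)
  moreover have "Gs a p (V - {i}) (z(i := t)) = Gs a p (V - {i}) z"
    by (rule Gs_cong) auto
  moreover have "Gs a (Suc p) (V - {i}) (z(i := t)) = Gs a (Suc p) (V - {i}) z"
    by (rule Gs_cong) auto
  ultimately show ?thesis by simp
qed

lemma pd_Gs:
  assumes "finite V" "i \<in> V"
  shows "pd i (Gs a p V) = Gs a (Suc p) (V - {i})"
proof
  fix z
  have "pd i (Gs a p V) z = deriv (\<lambda>t. Gs a p (V - {i}) z + t * Gs a (Suc p) (V - {i}) z) (z i)"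
    unfolding pd_def using Gs_upd[OF assms] by simp
  also have "\<dots> = Gs a (Suc p) (V - {i}) z"
    by (rule DERIV_imp_deriv) (auto intro!: derivative_eq_intros)
  finally show "pd i (Gs a p V) z = Gs a (Suc p) (V - {i}) z" .
qed

lemma delta_Gs:
  assumes "finite V" "i \<in> V" "j \<in> V" "i \<noteq> j"
  shows "pd i (Gs a 0 V) z * pd j (Gs a 0 V) z - pd j (pd i (Gs a 0 V)) z * Gs a 0 V z
     = (Gs a 1 (V - {i, j}) z)^2 - Gs a 0 (V - {i, j}) z * Gs a 2 (V - {i, j}) z"
proof -
  let ?W = "V - {i, j}"
  have f: "finite ?W" "i \<notin> ?W" "j \<notin> ?W" using assms by auto
  have e1: "V - {i} = insert j ?W" using assms by auto
  have e2: "V - {j} = insert i ?W" using assms by auto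
  have e3: "V = insert i (insert j ?W)" using assms by auto
  have e4: "V - {i} - {j} = ?W" by auto
  have "pd i (Gs a 0 V) = Gs a 1 (V - {i})" using pd_Gs[OF assms(1,2)] by simp
  moreover have "pd j (Gs a 0 V) = Gs a 1 (V - {j})" using pd_Gs[OF assms(1,3)] by simp
  moreover have "pd j (Gs a 1 (V - {i})) = Gs a 2 ?W"
    using pd_Gs[of "V - {i}" j a 1] assms by (simp add: e4 numeral_2_eq_2)
  ultimately have "pd i (Gs a 0 V) z * pd j (Gs a 0 V) z - pd j (pd i (Gs a 0 V)) z * Gs a 0 V z
     = Gs a 1 (insert j ?W) z * Gs a 1 (insert i ?W) z - Gs a 2 ?W z * Gs a 0 (insert i (insert j ?W)) z"
    using e1 e2 e3 by simp
  also have "\<dots> = (Gs a 1 ?W z + z j * Gs a 2 ?W z) * (Gs a 1 ?W z + z i * Gs a 2 ?W z)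
     - Gs a 2 ?W z * ((Gs a 0 ?W z + z j * Gs a 1 ?W z) + z i * (Gs a 1 ?W z + z j * Gs a 2 ?W z))"
  proof -
    have g1: "Gs a 1 (insert j ?W) z = Gs a 1 ?W z + z j * Gs a 2 ?W z"
      using Gs_insert[of ?W j a 1 z] f by (simp add: numeral_2_eq_2)
    have g2: "Gs a 1 (insert i ?W) z = Gs a 1 ?W z + z i * Gs a 2 ?W z"
      using Gs_insert[of ?W i a 1 z] f by (simp add: numeral_2_eq_2)
    have g3: "Gs a 0 (insert j ?W) z = Gs a 0 ?W z + z j * Gs a 1 ?W z"
      using Gs_insert[of ?W j a 0 z] f by simp
    have g4: "Gs a 0 (insert i (insert j ?W)) z = Gs a 0 (insert j ?W) z + z i * Gs a 1 (insert j ?W) z"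
      using Gs_insert[of "insert j ?W" i a 0 z] f assms(4) by simp
    show ?thesis by (simp only: g1 g2 g3 g4)
  qed
  also have "\<dots> = (Gs a 1 ?W z)^2 - Gs a 0 ?W z * Gs a 2 ?W z"
    by (simp add: algebra_simps power2_eq_square)
  finally show ?thesis .
qed

definition Pr :: "(nat \<Rightarrow> real) \<Rightarrow> nat \<Rightarrow> nat set \<Rightarrow> bool" where
  "Pr a p W \<longleftrightarrow> (\<forall>w. (\<forall>k\<in>W. w k > 0) \<longrightarrow> Gs a p W w * Gs a (p+2) W w \<le> (Gs a (p+1) W w)^2)"

lemma quad_limit:
  fixes \<alpha> \<beta> \<gamma> :: real
  assumes "\<And>t. t > 0 \<Longrightarrow> 0 \<le> \<alpha> + \<beta> * t + \<gamma> * t^2"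
  shows "0 \<le> \<alpha>"
proof -
  have lim: "((\<lambda>t. \<alpha> + \<beta> * t + \<gamma> * t^2) \<longlongrightarrow> \<alpha> + \<beta> * 0 + \<gamma> * 0^2) (at_right 0)"
    by (intro tendsto_intros)
  have ev: "eventually (\<lambda>t. 0 \<le> \<alpha> + \<beta> * t + \<gamma> * t^2) (at_right (0::real))"
    using assms eventually_at_right_less[of 0] by (auto elim: eventually_mono)
  have "0 \<le> \<alpha> + \<beta> * 0 + \<gamma> * 0^2"
    by (rule tendsto_lowerbound[OF lim ev]) simp
  then show ?thesis by simp
qed

lemma Pr_reduce:
  assumes "finite W" "k \<in> W" "Pr a p W"
  shows "Pr a p (W - {k}) \<and> Pr a (Suc p) (W - {k})"
proof -
  let ?U = "W - {k}"
  have fU: "finite ?U" using assms by simp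
  have key: "\<And>w t. (\<forall>i\<in>?U. w i > 0) \<Longrightarrow> t > 0 \<Longrightarrow>
     Gs a p ?U w * Gs a (p+2) ?U w + t * (Gs a p ?U w * Gs a (p+3) ?U w + Gs a (p+1) ?U w * Gs a (p+2) ?U w)
       + t^2 * (Gs a (p+1) ?U w * Gs a (p+3) ?U w)
     \<le> (Gs a (p+1) ?U w)^2 + t * (2 * Gs a (p+1) ?U w * Gs a (p+2) ?U w) + t^2 * (Gs a (p+2) ?U w)^2"
  proof -
    fix w :: "nat \<Rightarrow> real" and t :: real
    assume w: "\<forall>i\<in>?U. w i > 0" and t: "t > 0"
    have "\<forall>i\<in>W. (w(k := t)) i > 0" using w t by auto
    then have "Gs a p W (w(k := t)) * Gs a (p+2) W (w(k := t)) \<le> (Gs a (p+1) W (w(k := t)))^2"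
      using assms(3) unfolding Pr_def by blast
    then show "Gs a p ?U w * Gs a (p+2) ?U w + t * (Gs a p ?U w * Gs a (p+3) ?U w + Gs a (p+1) ?U w * Gs a (p+2) ?U w)
       + t^2 * (Gs a (p+1) ?U w * Gs a (p+3) ?U w)
     \<le> (Gs a (p+1) ?U w)^2 + t * (2 * Gs a (p+1) ?U w * Gs a (p+2) ?U w) + t^2 * (Gs a (p+2) ?U w)^2"
      using assms(1,2) by (simp add: Gs_upd eval_nat_numeral algebra_simps power2_eq_square)
  qed
  have P1: "Pr a p ?U" unfolding Pr_def
  proof (intro allI impI)
    fix w :: "nat \<Rightarrow> real" assume w: "\<forall>i\<in>?U. w i > 0"
    have "0 \<le> ((Gs a (p+1) ?U w)^2 - Gs a p ?U w * Gs a (p+2) ?U w)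
       + (2 * Gs a (p+1) ?U w * Gs a (p+2) ?U w - (Gs a p ?U w * Gs a (p+3) ?U w + Gs a (p+1) ?U w * Gs a (p+2) ?U w)) * t
       + ((Gs a (p+2) ?U w)^2 - Gs a (p+1) ?U w * Gs a (p+3) ?U w) * t^2" if "t > 0" for t :: real
      using key[OF w that] by (simp add: algebra_simps)
    from quad_limit[OF this] show "Gs a p ?U w * Gs a (p+2) ?U w \<le> (Gs a (p+1) ?U w)^2" by simp
  qed
  have P2: "Pr a (Suc p) ?U" unfolding Pr_def
  proof (intro allI impI)
    fix w :: "nat \<Rightarrow> real" assume w: "\<forall>i\<in>?U. w i > 0"
    have "0 \<le> ((Gs a (p+2) ?U w)^2 - Gs a (p+1) ?U w * Gs a (p+3) ?U w)
       + (2 * Gs a (p+1) ?U w * Gs a (p+2) ?U w - (Gs a p ?U w * Gs a (p+3) ?U w + Gs a (p+1) ?U w * Gs a (p+2) ?U w)) * u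
       + ((Gs a (p+1) ?U w)^2 - Gs a p ?U w * Gs a (p+2) ?U w) * u^2" if u: "u > 0" for u :: real
    proof -
      have "0 < 1 / u" using u by simp
      note k = key[OF w this]
      have "u^2 * (Gs a p ?U w * Gs a (p+2) ?U w + (1/u) * (Gs a p ?U w * Gs a (p+3) ?U w + Gs a (p+1) ?U w * Gs a (p+2) ?U w)
       + (1/u)^2 * (Gs a (p+1) ?U w * Gs a (p+3) ?U w))
     \<le> u^2 * ((Gs a (p+1) ?U w)^2 + (1/u) * (2 * Gs a (p+1) ?U w * Gs a (p+2) ?U w) + (1/u)^2 * (Gs a (p+2) ?U w)^2)"
        using k by (intro mult_left_mono) auto
      then show ?thesis using u by (simp add: algebra_simps power2_eq_square)
    qed
    from quad_limit[OF this] show "Gs a (Suc p) ?U w * Gs a (Suc p+2) ?U w \<le> (Gs a (Suc p+1) ?U w)^2"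
      by (simp add: eval_nat_numeral)
  qed
  from P1 P2 show ?thesis ..
qed

lemma Pr_mono:
  assumes "finite W" "Pr a p W" "finite D"
  shows "Pr a p (W - D)"
  using assms(3)
proof (induction D rule: finite_induct)
  case empty
  then show ?case using assms by simp
next
  case (insert k D)
  show ?case
  proof (cases "k \<in> W - D")
    case True
    have "Pr a p ((W - D) - {k})" using Pr_reduce[OF _ True insert.IH] assms(1) by simp
    moreover have "(W - D) - {k} = W - insert k D" by auto
    ultimately show ?thesis by simp
  next
    case False
    then have "W - insert k D = W - D" by auto
    then show ?thesis using insert.IH by simp
  qed
qed

lemma Pr_shift:
  assumes "finite W" "Pr a p W" "q \<le> card W"
  shows "\<exists>W'. W' \<subseteq> W \<and> card W' = card W - q \<and> Pr a (p + q) W'"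
  using assms(3)
proof (induction q)
  case 0
  then show ?case using assms by auto
next
  case (Suc q)
  then obtain W' where W': "W' \<subseteq> W" "card W' = card W - q" "Pr a (p + q) W'" by auto
  have fW': "finite W'" using W'(1) assms(1) finite_subset by blast
  have "card W' \<noteq> 0" using W'(2) Suc.prems by simp
  then obtain k where k: "k \<in> W'" by fastforce
  have "Pr a (Suc (p + q)) (W' - {k})" using Pr_reduce[OF fW' k W'(3)] by simp
  moreover have "card (W' - {k}) = card W - Suc q" using W'(2) k fW' by simp
  moreover have "W' - {k} \<subseteq> W" using W'(1) by auto
  ultimately show ?case by auto
qed

lemma Pr_sub:
  assumes "finite W" "Pr a 0 W" "q + n \<le> card W"
  shows "\<exists>W'. finite W' \<and> card W' = n \<and> Pr a q W'"
proof -
  obtain W1 where W1: "W1 \<subseteq> W" "card W1 = card W - q" "Pr a q W1"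
    using Pr_shift[OF assms(1,2), of q] assms(3) by auto
  have f1: "finite W1" using W1(1) assms(1) finite_subset by blast
  have "n \<le> card W1" using W1(2) assms(3) by simp
  then obtain T where T: "T \<subseteq> W1" "card T = n" using obtain_subset_with_card_n by metis
  have "Pr a q (W1 - (W1 - T))" using Pr_mono[OF f1 W1(3)] f1 by simp
  moreover have "W1 - (W1 - T) = T" using T by auto
  ultimately show ?thesis using T f1 finite_subset by metis
qed

lemma lc_from_Pr:
  assumes "finite W" "Pr a 0 W" "\<And>n. n > card W + 2 \<Longrightarrow> a n = 0" "\<And>n. a n \<ge> 0"
  shows "lcs a"
  unfolding lcs_def
proof
  fix n
  show "a n * a (n + 2) \<le> (a (n + 1))\<^sup>2"
  proof (cases "n \<le> card W")
    case True
    then obtain W' where W': "finite W'" "card W' = 0" "Pr a n W'" using Pr_sub[OF assms(1,2), of n 0] by auto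
    then have "W' = {}" by simp
    then show ?thesis using W'(3) unfolding Pr_def by auto
  next
    case False
    then have "a (n+2) = 0" using assms(3) by simp
    then show ?thesis by simp
  qed
qed

lemma niz_from_Pr:
  assumes fW: "finite W" and P: "Pr a 0 W" and z: "\<And>n. n > card W + 2 \<Longrightarrow> a n = 0" and nn: "\<And>n. a n \<ge> 0"
  shows "nizs a"
  unfolding nizs_def
proof (intro allI impI)
  fix i j k assume h: "i < j \<and> j < k \<and> a i \<noteq> 0 \<and> a k \<noteq> 0"
  show "a j \<noteq> 0"
  proof
    assume aj: "a j = 0"
    let ?L = "{x. x < j \<and> a x \<noteq> 0}"
    let ?R = "{x. j < x \<and> x \<le> k \<and> a x \<noteq> 0}"
    have fL: "finite ?L" by (rule finite_subset[of _ "{..<j}"]) auto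
    have fR: "finite ?R" by (rule finite_subset[of _ "{..k}"]) auto
    have neL: "i \<in> ?L" using h by auto
    have neR: "k \<in> ?R" using h by auto
    define p where "p = Max ?L"
    define q where "q = Min ?R"
    have pL: "p \<in> ?L" unfolding p_def using fL neL Max_in by blast
    have qR: "q \<in> ?R" unfolding q_def using fR neR Min_in by blast
    have gap: "a x = 0" if "p < x" "x < q" for x
    proof (cases "x < j")
      case True
      show ?thesis
      proof (rule ccontr)
        assume "a x \<noteq> 0"
        then have "x \<in> ?L" using True by auto
        then have "x \<le> p" unfolding p_def using fL Max_ge by blast
        then show False using that by simp
      qed
    next
      case False
      show ?thesis
      proof (cases "x = j")
        case True then show ?thesis using aj by simp
      next
        case False
        show ?thesis
        proof (rule ccontr)
          assume "a x \<noteq> 0"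
          then have "x \<in> ?R" using False \<open>\<not> x < j\<close> that qR by auto
          then have "q \<le> x" unfolding q_def using fR Min_le by blast
          then show False using that by simp
        qed
      qed
    qed
    have pq: "p + 2 \<le> q" using pL qR aj by (cases "q = p + 1") auto
    have kb: "k \<le> card W + 2" using h z by (meson not_le)
    have "q \<le> k" using qR by simp
    then have "p + (q - p - 2) \<le> card W" using pq kb by simp
    then obtain W' where W': "finite W'" "card W' = q - p - 2" "Pr a p W'"
      using Pr_sub[OF fW P] by blast
    let ?w = "\<lambda>_::nat. 1::real"
    have G0: "Gs a p W' ?w = a p"
    proof -
      have "Gs a p W' ?w = (\<Sum>A\<in>Pow W'. if A = {} then a p else 0)"
        unfolding Gs_def
      proof (rule sum.cong[OF refl])
        fix A assume A: "A \<in> Pow W'"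
        then have fA: "finite A" using W'(1) finite_subset by auto
        have "card A \<le> q - p - 2" using A W' card_mono by fastforce
        show "a (card A + p) * (\<Prod>i\<in>A. ?w i) = (if A = {} then a p else 0)"
        proof (cases "A = {}")
          case True then show ?thesis by simp
        next
          case False
          then have "0 < card A" using fA by (simp add: card_gt_0_iff)
          then have "a (card A + p) = 0" using gap[of "card A + p"] pq \<open>card A \<le> q - p - 2\<close> by simp
          then show ?thesis using False by simp
        qed
      qed
      also have "\<dots> = a p" by (simp add: sum.delta[OF finite_Pow_iff[THEN iffD2, OF W'(1)]])
      finally show ?thesis .
    qed
    have G1: "Gs a (p+1) W' ?w = 0"
      unfolding Gs_def
    proof (rule sum.neutral, rule ballI)
      fix A assume A: "A \<in> Pow W'"
      have "card A \<le> q - p - 2" using A W' card_mono by fastforce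
      then show "a (card A + (p+1)) * (\<Prod>i\<in>A. ?w i) = 0"
        using gap[of "card A + (p+1)"] pq by auto
    qed
    have G2: "Gs a (p+2) W' ?w \<ge> 0"
      unfolding Gs_def using nn by (auto intro: sum_nonneg)
    have G2': "Gs a (p+2) W' ?w \<ge> a q"
    proof -
      have "Gs a (p+2) W' ?w = (\<Sum>A\<in>Pow W'. a (card A + (p+2)))" unfolding Gs_def by simp
      also have "\<dots> \<ge> a (card W' + (p+2))"
        using sum_nonneg_leq_bound[of "Pow W'" "\<lambda>A. a (card A + (p+2))"] W'(1) nn
        by (metis (no_types, lifting) Pow_top finite_Pow_iff member_le_sum)
      finally have "a (card W' + (p+2)) \<le> Gs a (p+2) W' ?w" .
      moreover have "card W' + (p+2) = q" using W'(2) pq by simp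
      ultimately show ?thesis by simp
    qed
    have "Gs a p W' ?w * Gs a (p+2) W' ?w \<le> (Gs a (p+1) W' ?w)^2"
      using W'(3)[unfolded Pr_def, rule_format, of ?w] by simp
    then have le0: "a p * Gs a (p+2) W' ?w \<le> 0" using G0 G1 by simp
    have ap: "a p > 0" using pL nn by (simp add: less_le)
    have aq: "a q > 0" using qR nn by (simp add: less_le)
    have "a p * a q \<le> a p * Gs a (p+2) W' ?w" by (rule mult_left_mono[OF G2']) (use ap in simp)
    moreover have "a p * a q > 0" using ap aq by simp
    ultimately show False using le0 by linarith
  qed
qed

lemma rayleigh_iff:
  assumes nn: "\<And>n. a n \<ge> 0" and z: "\<And>j. j > l \<Longrightarrow> a j = 0"
  shows "rayleigh l (Gs a 0 {1..l}) \<longleftrightarrow> lcs a \<and> nizs a"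
proof
  assume R: "rayleigh l (Gs a 0 {1..l})"
  show "lcs a \<and> nizs a"
  proof (cases "l < 2")
    case True
    have "lcs a" unfolding lcs_def
    proof
      fix n have "a (n+2) = 0" using z True by simp
      then show "a n * a (n + 2) \<le> (a (n + 1))\<^sup>2" by simp
    qed
    moreover have "nizs a" unfolding nizs_def
    proof (intro allI impI)
      fix i j k assume "i < j \<and> j < k \<and> a i \<noteq> 0 \<and> a k \<noteq> 0"
      then show "a j \<noteq> 0" using z[of k] True by simp
    qed
    ultimately show ?thesis ..
  next
    case False
    let ?W = "{1..l} - {1, 2}"
    have fW: "finite ?W" by simp
    have cW: "card ?W = l - 2" using False by (simp add: card_Diff_subset)
    have P: "Pr a 0 ?W" unfolding Pr_def
    proof (intro allI impI)
      fix w :: "nat \<Rightarrow> real" assume w: "\<forall>k\<in>?W. w k > 0"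
      let ?z = "w(1 := 1, 2 := 1)"
      have zp: "\<forall>k\<in>{1..l}. ?z k > 0" using w by auto
      have "0 \<le> pd 1 (Gs a 0 {1..l}) ?z * pd 2 (Gs a 0 {1..l}) ?z - pd 2 (pd 1 (Gs a 0 {1..l})) ?z * Gs a 0 {1..l} ?z"
        using R zp False unfolding rayleigh_def by auto
      also have "\<dots> = (Gs a 1 ?W ?z)^2 - Gs a 0 ?W ?z * Gs a 2 ?W ?z"
        by (rule delta_Gs) (use False in auto)
      also have "\<dots> = (Gs a 1 ?W w)^2 - Gs a 0 ?W w * Gs a 2 ?W w"
      proof -
        have "\<And>q. Gs a q ?W ?z = Gs a q ?W w" by (rule Gs_cong) auto
        then show ?thesis by simp
      qed
      finally show "Gs a 0 ?W w * Gs a (0 + 2) ?W w \<le> (Gs a (0 + 1) ?W w)^2" by (simp add: numeral_2_eq_2)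
    qed
    have z': "\<And>n. n > card ?W + 2 \<Longrightarrow> a n = 0" using z cW False by simp
    show ?thesis using lc_from_Pr[OF fW P z' nn] niz_from_Pr[OF fW P z' nn] by simp
  qed
next
  assume L: "lcs a \<and> nizs a"
  have "multiaffine_nonneg l (Gs a 0 {1..l})"
    unfolding multiaffine_nonneg_def
    by (rule exI[of _ "\<lambda>A. a (card A)"]) (auto simp: Gs_def nn)
  moreover have "\<forall>i\<in>{1..l}. \<forall>j\<in>{1..l}. i \<noteq> j \<longrightarrow> (\<forall>z. (\<forall>k\<in>{1..l}. z k > 0) \<longrightarrow>
        pd i (Gs a 0 {1..l}) z * pd j (Gs a 0 {1..l}) z - pd j (pd i (Gs a 0 {1..l})) z * Gs a 0 {1..l} z \<ge> 0)"
  proof (intro ballI impI allI)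
    fix i j z assume ij: "i \<in> {1..l}" "j \<in> {1..l}" "i \<noteq> j" and zp: "\<forall>k\<in>{1..l}. (z::nat\<Rightarrow>real) k > 0"
    let ?W = "{1..l} - {i, j}"
    have "(\<forall>n. Gs a n ?W z \<ge> 0) \<and> lcs (\<lambda>n. Gs a n ?W z) \<and> nizs (\<lambda>n. Gs a n ?W z)"
      by (rule Gs_seq) (use zp nn L in \<open>auto simp: less_imp_le\<close>)
    then have "Gs a 0 ?W z * Gs a 2 ?W z \<le> (Gs a 1 ?W z)^2" unfolding lcs_def
      by (metis add_0)
    then show "pd i (Gs a 0 {1..l}) z * pd j (Gs a 0 {1..l}) z - pd j (pd i (Gs a 0 {1..l})) z * Gs a 0 {1..l} z \<ge> 0"
      using delta_Gs[of "{1..l}" i j a z] ij by simp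
  qed
  ultimately show "rayleigh l (Gs a 0 {1..l})" unfolding rayleigh_def by blast
qed

lemma esym_alt:
  "esym l (int r - int (card S)) z = (\<Sum>A\<in>Pow {1..l}. if card S + card A = r then (\<Prod>i\<in>A. z i) else 0)"
proof (cases "int r - int (card S) < 0")
  case True
  then have "\<And>A. card S + card A \<noteq> r" by linarith
  then show ?thesis using True unfolding esym_def by simp
next
  case False
  have "{A. A \<subseteq> {1..l} \<and> int (card A) = int r - int (card S)} = {A \<in> Pow {1..l}. card S + card A = r}"
    by auto
  then have "esym l (int r - int (card S)) z = (\<Sum>A\<in>{A \<in> Pow {1..l}. card S + card A = r}. \<Prod>i\<in>A. z i)"
    using False unfolding esym_def by simp
  also have "\<dots> = (\<Sum>A\<in>Pow {1..l}. if card S + card A = r then (\<Prod>i\<in>A. z i) else 0)"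
    by (rule sum.inter_filter) simp
  finally show ?thesis .
qed

lemma Zflat_Gs:
  assumes fE: "finite E"
  shows "Zflat E \<omega> (\<lambda>_. 1) z = Gs (\<lambda>j. if j \<le> rmax E \<omega> - smin E \<omega> then fk E \<omega> (rmax E \<omega> - j) else 0) 0
            {1..rmax E \<omega> - smin E \<omega>} z"
proof -
  let ?r = "rmax E \<omega>" and ?l = "rmax E \<omega> - smin E \<omega>"
  have "Zflat E \<omega> (\<lambda>_. 1) z = (\<Sum>S\<in>Pow E. \<omega> S * (\<Sum>A\<in>Pow {1..?l}. if card S + card A = ?r then (\<Prod>i\<in>A. z i) else 0))"
    unfolding Zflat_def esym_alt Pow_def by simp
  also have "\<dots> = (\<Sum>S\<in>Pow E. \<Sum>A\<in>Pow {1..?l}. if card S + card A = ?r then \<omega> S * (\<Prod>i\<in>A. z i) else 0)"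
    by (simp add: sum_distrib_left if_distrib cong: if_cong)
  also have "\<dots> = (\<Sum>A\<in>Pow {1..?l}. \<Sum>S\<in>Pow E. if card S + card A = ?r then \<omega> S * (\<Prod>i\<in>A. z i) else 0)"
    by (rule sum.swap)
  also have "\<dots> = (\<Sum>A\<in>Pow {1..?l}. (if card A \<le> ?l then fk E \<omega> (?r - card A) else 0) * (\<Prod>i\<in>A. z i))"
  proof (rule sum.cong[OF refl])
    fix A assume A: "A \<in> Pow {1..?l}"
    then have cA: "card A \<le> ?l" using card_mono[of "{1..?l}" A] by simp
    have "fk E \<omega> (?r - card A) = (\<Sum>S\<in>{S \<in> Pow E. card S = ?r - card A}. \<omega> S)"
      unfolding fk_def by (rule sum.cong) auto
    also have "\<dots> = (\<Sum>S\<in>Pow E. if card S = ?r - card A then \<omega> S else 0)"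
      by (rule sum.inter_filter) (simp add: fE)
    also have "\<dots> = (\<Sum>S\<in>Pow E. if card S + card A = ?r then \<omega> S else 0)"
      by (rule sum.cong[OF refl]) (use cA in auto)
    finally have "fk E \<omega> (?r - card A) * (\<Prod>i\<in>A. z i) = (\<Sum>S\<in>Pow E. if card S + card A = ?r then \<omega> S else 0) * (\<Prod>i\<in>A. z i)"
      by simp
    also have "\<dots> = (\<Sum>S\<in>Pow E. (if card S + card A = ?r then \<omega> S else 0) * (\<Prod>i\<in>A. z i))"
      by (simp add: sum_distrib_right)
    also have "\<dots> = (\<Sum>S\<in>Pow E. if card S + card A = ?r then \<omega> S * (\<Prod>i\<in>A. z i) else 0)"
      by (rule sum.cong) auto
    finally show "(\<Sum>S\<in>Pow E. if card S + card A = ?r then \<omega> S * (\<Prod>i\<in>A. z i) else 0)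
        = (if card A \<le> ?l then fk E \<omega> (?r - card A) else 0) * (\<Prod>i\<in>A. z i)"
      using cA by simp
  qed
  finally show ?thesis unfolding Gs_def add_0_right by simp
qed

lemma trans_lc:
  assumes nn: "\<And>k. f k \<ge> 0"
  shows "log_concave_on f s r \<longleftrightarrow> lcs (\<lambda>j. if j \<le> r - s then f (r - j) else (0::real))"
  (is "_ \<longleftrightarrow> lcs ?a")
proof
  assume H: "log_concave_on f s r"
  show "lcs ?a" unfolding lcs_def
  proof
    fix n
    show "?a n * ?a (n + 2) \<le> (?a (n + 1))\<^sup>2"
    proof (cases "n + 2 \<le> r - s")
      case True
      define k where "k = r - (n + 1)"
      have k: "s < k" "k < r" using True unfolding k_def by linarith+
      have "f (k - 1) * f (k + 1) \<le> (f k)^2" using H k unfolding log_concave_on_def by blast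
      moreover have "k - 1 = r - (n+2)" "k + 1 = r - n" using True unfolding k_def by linarith+
      ultimately show ?thesis using True unfolding k_def by (simp add: mult.commute)
    next
      case False
      then show ?thesis using nn by simp
    qed
  qed
next
  assume H: "lcs ?a"
  show "log_concave_on f s r" unfolding log_concave_on_def
  proof (intro allI impI)
    fix k assume k: "s < k \<and> k < r"
    define n where "n = r - k - 1"
    have "?a n * ?a (n + 2) \<le> (?a (n + 1))\<^sup>2" using H unfolding lcs_def by blast
    moreover have "n + 2 \<le> r - s" "r - n = k + 1" "r - (n+1) = k" "r - (n + 2) = k - 1"
      using k unfolding n_def by linarith+
    ultimately show "f (k - 1) * f (k + 1) \<le> (f k)^2" by (simp add: mult.commute)
  qed
qed

lemma trans_niz:
  assumes nn: "\<And>k. f k \<ge> 0"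
  shows "no_internal_zeros_on f s r \<longleftrightarrow> nizs (\<lambda>j. if j \<le> r - s then f (r - j) else (0::real))"
  (is "_ \<longleftrightarrow> nizs ?a")
proof
  assume H: "no_internal_zeros_on f s r"
  show "nizs ?a" unfolding nizs_def
  proof (intro allI impI)
    fix i j k assume h: "i < j \<and> j < k \<and> ?a i \<noteq> 0 \<and> ?a k \<noteq> 0"
    then have kl: "k \<le> r - s" by (auto split: if_splits)
    then have b: "s \<le> r - k" "r - k < r - j" "r - j < r - i" "r - i \<le> r" using h by linarith+
    have "f (r - i) \<noteq> 0" "f (r - k) \<noteq> 0" using h kl by (auto split: if_splits)
    then have "f (r - k) * f (r - i) \<noteq> 0" by simp
    then have "f (r - j) \<noteq> 0" using H b unfolding no_internal_zeros_on_def by blast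
    then show "?a j \<noteq> 0" using h kl by simp
  qed
next
  assume H: "nizs ?a"
  show "no_internal_zeros_on f s r" unfolding no_internal_zeros_on_def
  proof (intro allI impI)
    fix i j k assume h: "s \<le> i \<and> i < j \<and> j < k \<and> k \<le> r \<and> f i * f k \<noteq> 0"
    have b: "r - k < r - j" "r - j < r - i" "r - i \<le> r - s" "r - (r - i) = i" "r - (r - j) = j" "r - (r - k) = k"
      using h by linarith+
    have "?a (r - k) \<noteq> 0" "?a (r - i) \<noteq> 0" using h b by auto
    then have "?a (r - j) \<noteq> 0" using H b unfolding nizs_def by blast
    then show "f j \<noteq> 0" using b by (auto split: if_splits)
  qed
qed

theorem proposition4p14:
  fixes E :: "'a set" and \<omega> :: "'a set \<Rightarrow> real"
  assumes "finite E"
    and "\<And>S. S \<subseteq> E \<Longrightarrow> \<omega> S \<ge> 0"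
    and "\<exists>S. S \<subseteq> E \<and> \<omega> S \<noteq> 0"
  shows "(log_concave_on (fk E \<omega>) (smin E \<omega>) (rmax E \<omega>) \<and>
          no_internal_zeros_on (fk E \<omega>) (smin E \<omega>) (rmax E \<omega>))
         \<longleftrightarrow> rayleigh (rmax E \<omega> - smin E \<omega>) (Zflat E \<omega> (\<lambda>_. 1))"
proof -
  let ?r = "rmax E \<omega>" and ?s = "smin E \<omega>"
  let ?l = "?r - ?s"
  let ?a = "\<lambda>j. if j \<le> ?l then fk E \<omega> (?r - j) else 0"
  have fnn: "\<And>k. fk E \<omega> k \<ge> 0" unfolding fk_def using assms(2) by (auto intro: sum_nonneg)
  have ann: "\<And>n. ?a n \<ge> 0" using fnn by simp
  have az: "\<And>j. j > ?l \<Longrightarrow> ?a j = 0" by simp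
  have Z: "Zflat E \<omega> (\<lambda>_. 1) = Gs ?a 0 {1..?l}"
    using Zflat_Gs[OF assms(1)] by blast
  have R: "rayleigh ?l (Gs ?a 0 {1..?l}) \<longleftrightarrow> lcs ?a \<and> nizs ?a" by (rule rayleigh_iff[OF ann az])
  show ?thesis
    unfolding Z trans_lc[OF fnn] trans_niz[OF fnn] using R by blast
qed
end
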